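(* Let $G=(V,E)$ be a finite, connected, undirected graph with $n\ge2$ vertices and let $r>1$. Then the absorption time $\tau$ of the Moran process on $G$ with fitness $r$ (started from a single mutant at any vertex) satisfies $$\mathbb{E}[\tau]\le\frac{r}{r-1}n^3\phi(G)\le\frac{r}{r-1}n^4.$$
   Context: The Moran process on $G$ with mutant fitness $r>0$ is the Markov chain $(X_i)_{i\ge0}$ whose state $X_i\subseteq V$ is the set of vertices occupied by mutants; every other vertex is occupied by a non-mutant of fitness $1$. Write $W(S)=r|S|+|V\setminus S|$ for the total fitness. Given $X_i=S$, one step is: choose a vertex $x$ with probability $r/W(S)$ if $x\in S$ and $1/W(S)$ if $x\notin S$; then choose a neighbour $y$ of $x$ uniformly at random; set $X_{i+1}=S\cup\{y\}$ if $x\in S$ and $X_{i+1}=S\setminus\{y\}$ if $x\notin S$. The process starts from $X_0=\{x\}$ for a single vertex $x$. The absorption time is $\tau=\min\{i: X_i=\emptyset\text{ or }X_i=V\}$. For $X\subseteq V$, $\phi(X)=\sum_{x\in X}\frac{1}{\deg x}$, and $\phi(G)=\phi(V)$. *)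

theory Defs
  imports "HOL-Probability.Probability"
begin

definition simple_graph :: "'a set \<Rightarrow> ('a \<Rightarrow> 'a \<Rightarrow> bool) \<Rightarrow> bool" where
  "simple_graph V E \<longleftrightarrow> finite V \<and> (\<forall>x y. E x y \<longrightarrow> x \<in> V \<and> y \<in> V)
     \<and> (\<forall>x y. E x y \<longrightarrow> E y x) \<and> (\<forall>x. \<not> E x x)"

definition connected_graph :: "'a set \<Rightarrow> ('a \<Rightarrow> 'a \<Rightarrow> bool) \<Rightarrow> bool" where
  "connected_graph V E \<longleftrightarrow> (\<forall>u\<in>V. \<forall>v\<in>V. E\<^sup>*\<^sup>* u v)"

definition nbrs :: "('a \<Rightarrow> 'a \<Rightarrow> bool) \<Rightarrow> 'a \<Rightarrow> 'a set" where
  "nbrs E x = {y. E x y}"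

definition deg :: "('a \<Rightarrow> 'a \<Rightarrow> bool) \<Rightarrow> 'a \<Rightarrow> nat" where
  "deg E x = card (nbrs E x)"

definition phi :: "('a \<Rightarrow> 'a \<Rightarrow> bool) \<Rightarrow> 'a set \<Rightarrow> real" where
  "phi E X = (\<Sum>x\<in>X. 1 / real (deg E x))"

definition fitness_total :: "'a set \<Rightarrow> real \<Rightarrow> 'a set \<Rightarrow> real" where
  "fitness_total V r S = r * real (card S) + real (card (V - S))"

text \<open>The reproducing vertex x
  is chosen with probability r/W(S) if x \<in> S and 1/W(S) otherwise: first decide
  whether it is a mutant (probability r|S|/W(S)), then pick it uniformly within
  its class.  The states {} and V are automatically absorbing.\<close>
definition moran_step :: "'a set \<Rightarrow> ('a \<Rightarrow> 'a \<Rightarrow> bool) \<Rightarrow> real \<Rightarrow> 'a set \<Rightarrow> 'a set pmf" where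
  "moran_step V E r S =
     bind_pmf (bernoulli_pmf (r * real (card S) / fitness_total V r S)) (\<lambda>mut.
       if mut then
         bind_pmf (pmf_of_set S) (\<lambda>x. map_pmf (\<lambda>y. S \<union> {y}) (pmf_of_set (nbrs E x)))
       else
         bind_pmf (pmf_of_set (V - S)) (\<lambda>x. map_pmf (\<lambda>y. S - {y}) (pmf_of_set (nbrs E x))))"

primrec moran_dist :: "'a set \<Rightarrow> ('a \<Rightarrow> 'a \<Rightarrow> bool) \<Rightarrow> real \<Rightarrow> 'a \<Rightarrow> nat \<Rightarrow> 'a set pmf" where
  "moran_dist V E r x0 0 = return_pmf {x0}"
| "moran_dist V E r x0 (Suc i) = bind_pmf (moran_dist V E r x0 i) (moran_step V E r)"

text \<open>Expected absorption time E[tau] = sum over i of Pr(tau > i), where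
  tau > i iff X_i is neither {} nor V (these states are absorbing).  Taken in
  ennreal, so the value may be infinite a priori.\<close>
definition expected_absorption_time ::
  "'a set \<Rightarrow> ('a \<Rightarrow> 'a \<Rightarrow> bool) \<Rightarrow> real \<Rightarrow> 'a \<Rightarrow> ennreal" where
  "expected_absorption_time V E r x0 =
     (\<Sum>i. ennreal (measure_pmf.prob (moran_dist V E r x0 i) {S. S \<noteq> {} \<and> S \<noteq> V}))"

end

theory Submission
  imports Defs
begin

lemma nn_pmf_of_set_real:
  assumes "finite A" "A \<noteq> {}" "\<And>x. x \<in> A \<Longrightarrow> 0 \<le> g x"
    and "\<And>x. x \<in> A \<Longrightarrow> h x = ennreal (g x)"
  shows "(\<integral>\<^sup>+x. h x \<partial>measure_pmf (pmf_of_set A)) = ennreal (sum g A / card A)"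
proof -
  have "(\<integral>\<^sup>+x. h x \<partial>measure_pmf (pmf_of_set A)) = (\<Sum>x\<in>A. h x) / of_nat (card A)"
    by (simp add: nn_integral_pmf_of_set[OF assms(2,1)])
  also have "(\<Sum>x\<in>A. h x) = ennreal (sum g A)"
    using assms by (simp add: sum_ennreal)
  also have "ennreal (sum g A) / of_nat (card A) = ennreal (sum g A / card A)"
    using assms by (subst ennreal_of_nat_eq_real_of_nat, subst divide_ennreal)
      (auto intro!: sum_nonneg simp: card_gt_0_iff)
  finally show ?thesis .
qed

lemma alg_drift:
  fixes s m F C r w :: real
  assumes "s > 0" "m > 0" "w = r * s + m" "w > 0"
  shows "((s * F + C) / s) * (r * s / w) + ((m * F - C) / m) * (m / w)
         = F + (r - 1) * C / w"
proof -
  have 1: "((s * F + C) / s) * (r * s / w) = r * (s * F + C) / w"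
    using assms(1,4) by (simp add: field_simps)
  have 2: "((m * F - C) / m) * (m / w) = (m * F - C) / w"
    using assms(2,4) by (simp add: field_simps)
  have 3: "r * (s * F + C) / w + (m * F - C) / w = (r * (s * F + C) + (m * F - C)) / w"
    by (simp add: add_divide_distrib)
  have 4: "r * (s * F + C) + (m * F - C) = F * w + (r - 1) * C" using assms(3) by (simp add: algebra_simps)
  show ?thesis unfolding 1 2 3 4 using assms(4) by (simp add: add_divide_distrib)
qed

locale moran =
  fixes V :: "'a set" and E :: "'a \<Rightarrow> 'a \<Rightarrow> bool" and r :: real
  assumes G: "simple_graph V E" and C: "connected_graph V E"
    and n2: "card V \<ge> 2" and r1: "r > 1"
begin

definition f :: "'a set \<Rightarrow> real" where "f S = phi E (S \<inter> V)"

lemma finV: "finite V" using G by (simp add: simple_graph_def)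

lemma nbrs_sub: "nbrs E x \<subseteq> V" using G by (auto simp: simple_graph_def nbrs_def)

lemma fin_nbrs: "finite (nbrs E x)" using nbrs_sub finV finite_subset by blast

lemma Esym: "E x y \<Longrightarrow> E y x" using G by (simp add: simple_graph_def)
lemma EV: "E x y \<Longrightarrow> x \<in> V \<and> y \<in> V" using G by (simp add: simple_graph_def)

lemma nbrs_ne: assumes "x \<in> V" shows "nbrs E x \<noteq> {}"
proof -
  have "V - {x} \<noteq> {}"
  proof
    assume "V - {x} = {}"
    then have "V \<subseteq> {x}" by blast
    then have "card V \<le> 1" using card_mono[OF _ \<open>V \<subseteq> {x}\<close>] by simp
    with n2 show False by simp
  qed
  then obtain v where v: "v \<in> V" "v \<noteq> x" by blast
  have "E\<^sup>*\<^sup>* x v" using C assms v by (simp add: connected_graph_def)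
  then obtain z where "E x z" using v(2) by (cases rule: converse_rtranclpE) auto
  then show ?thesis by (auto simp: nbrs_def)
qed

lemma deg_pos: "x \<in> V \<Longrightarrow> deg E x > 0"
  using nbrs_ne fin_nbrs by (simp add: deg_def card_gt_0_iff)

lemma deg_le: "deg E x \<le> card V"
  unfolding deg_def using nbrs_sub finV by (rule card_mono[rotated])

lemma phi_nonneg: "phi E X \<ge> 0" unfolding phi_def by (auto intro!: sum_nonneg)

lemma f_nonneg: "f S \<ge> 0" unfolding f_def by (rule phi_nonneg)

lemma f_le: "f S \<le> phi E V"
  unfolding f_def phi_def using finV by (intro sum_mono2) auto

lemma phi_le_card: "phi E V \<le> card V"
proof -
  have "phi E V \<le> (\<Sum>x\<in>V. 1)" unfolding phi_def
    by (intro sum_mono) (auto simp: divide_le_eq_1)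
  then show ?thesis by simp
qed

lemma f_ins: "S \<subseteq> V \<Longrightarrow> y \<in> V \<Longrightarrow> f (S \<union> {y}) = f S + (if y \<in> S then 0 else 1 / deg E y)"
proof -
  assume a: "S \<subseteq> V" "y \<in> V"
  then have "(S \<union> {y}) \<inter> V = insert y S" "S \<inter> V = S" by auto
  moreover have "finite S" using a finV finite_subset by blast
  ultimately show ?thesis unfolding f_def phi_def by (auto simp: insert_absorb)
qed

lemma f_del: "S \<subseteq> V \<Longrightarrow> f (S - {y}) = f S - (if y \<in> S then 1 / deg E y else 0)"
proof -
  assume a: "S \<subseteq> V"
  then have "(S - {y}) \<inter> V = S - {y}" "S \<inter> V = S" by auto
  moreover have "finite S" using a finV finite_subset by blast
  ultimately show ?thesis unfolding f_def phi_def by (auto simp: sum_diff1)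
qed

lemma boundary_edge:
  assumes "E\<^sup>*\<^sup>* u v" "u \<in> S" "v \<notin> S"
  shows "\<exists>x y. x \<in> S \<and> y \<notin> S \<and> E x y"
  using assms by (induction rule: rtranclp_induct) auto

definition W :: "'a set \<Rightarrow> real" where "W S = fitness_total V r S"

lemma W_pos: "S \<subseteq> V \<Longrightarrow> S \<noteq> {} \<or> S \<noteq> V \<Longrightarrow> W S > 0"
proof -
  assume a: "S \<subseteq> V" "S \<noteq> {} \<or> S \<noteq> V"
  have fS: "finite S" using a finV finite_subset by blast
  show ?thesis
  proof (cases "S = {}")
    case True
    then have "V \<noteq> {}" using a by auto
    then show ?thesis using True finV by (simp add: W_def fitness_total_def card_gt_0_iff)
  next
    case False
    then have "card S > 0" using fS by (simp add: card_gt_0_iff)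
    then show ?thesis using r1 by (simp add: W_def fitness_total_def add_pos_nonneg)
  qed
qed

lemma card_VS: "S \<subseteq> V \<Longrightarrow> real (card (V - S)) = real (card V) - real (card S)"
  using finV by (simp add: card_Diff_subset finite_subset of_nat_diff card_mono)

definition p :: "'a set \<Rightarrow> real" where "p S = r * real (card S) / W S"

lemma p_bounds: "S \<subseteq> V \<Longrightarrow> 0 \<le> p S \<and> p S \<le> 1"
proof -
  assume a: "S \<subseteq> V"
  show ?thesis
  proof (cases "S = {}")
    case True then show ?thesis by (simp add: p_def)
  next
    case False
    then have "W S > 0" using W_pos a by blast
    moreover have "r * real (card S) \<le> W S" by (simp add: W_def fitness_total_def)
    ultimately show ?thesis using r1 by (simp add: p_def divide_le_eq_1)
  qed
qed

lemma step_support: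
  assumes "S \<subseteq> V" "T \<in> set_pmf (moran_step V E r S)"
  shows "T \<subseteq> V"
proof -
  obtain b where b: "b \<in> set_pmf (bernoulli_pmf (p S))"
    and T: "T \<in> set_pmf (if b then
         bind_pmf (pmf_of_set S) (\<lambda>x. map_pmf (\<lambda>y. S \<union> {y}) (pmf_of_set (nbrs E x)))
       else
         bind_pmf (pmf_of_set (V - S)) (\<lambda>x. map_pmf (\<lambda>y. S - {y}) (pmf_of_set (nbrs E x))))"
    using assms(2) unfolding moran_step_def p_def W_def by auto
  show ?thesis
  proof (cases b)
    case False
    then show ?thesis using T assms(1) by auto
  next
    case True
    have "pmf (bernoulli_pmf (p S)) True \<noteq> 0" using b True by (simp add: set_pmf_iff)
    then have "p S \<noteq> 0" using p_bounds[OF assms(1)] by simp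
    then have Sne: "S \<noteq> {}" by (auto simp: p_def)
    have fS: "finite S" using assms(1) finV finite_subset by blast
    from T True obtain x y where x: "x \<in> S" and y: "y \<in> set_pmf (pmf_of_set (nbrs E x))"
      and Ty: "T = S \<union> {y}" using Sne fS by auto
    have xV: "x \<in> V" using x assms(1) by blast
    have "y \<in> nbrs E x" using y nbrs_ne[OF xV] fin_nbrs by simp
    then have "y \<in> V" using nbrs_sub by blast
    then show ?thesis using Ty assms(1) by blast
  qed
qed

lemma dist_support: "x0 \<in> V \<Longrightarrow> T \<in> set_pmf (moran_dist V E r x0 i) \<Longrightarrow> T \<subseteq> V"
proof (induction i arbitrary: T)
  case 0 then show ?case by simp
next
  case (Suc i) then show ?case using step_support by (auto 0 0) (meson step_support subsetD)
qed

definition c :: "'a \<Rightarrow> 'a \<Rightarrow> real" where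
  "c x y = (if E x y then 1 / (real (deg E x) * real (deg E y)) else 0)"

lemma c_sym: "c x y = c y x" unfolding c_def using Esym by (auto simp: mult.commute)

lemma c_nonneg: "c x y \<ge> 0" unfolding c_def by simp

lemma sum_if_out: "finite A \<Longrightarrow> (\<Sum>y\<in>A. if y \<in> S then 0 else g y) = (\<Sum>y\<in>A - S. g y)"
proof -
  assume "finite A"
  then have "(\<Sum>y\<in>{y\<in>A. y \<notin> S}. g y) = (\<Sum>y\<in>A. if y \<notin> S then g y else 0)"
    by (rule sum.inter_filter)
  moreover have "{y\<in>A. y \<notin> S} = A - S" by auto
  ultimately show ?thesis by (auto intro!: sum.cong)
qed

lemma sum_if_in: "finite A \<Longrightarrow> (\<Sum>y\<in>A. if y \<in> S then g y else 0) = (\<Sum>y\<in>A \<inter> S. g y)"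
proof -
  assume "finite A"
  then have "(\<Sum>y\<in>{y\<in>A. y \<in> S}. g y) = (\<Sum>y\<in>A. if y \<in> S then g y else 0)"
    by (rule sum.inter_filter)
  moreover have "{y\<in>A. y \<in> S} = A \<inter> S" by auto
  ultimately show ?thesis by simp
qed

lemma c_sum: "x \<in> V \<Longrightarrow> B \<subseteq> V \<Longrightarrow>
   (\<Sum>y\<in>B. c x y) = (\<Sum>y\<in>nbrs E x \<inter> B. 1 / real (deg E y)) / real (deg E x)"
proof -
  assume x: "x \<in> V" and B: "B \<subseteq> V"
  have fB: "finite B" using B finV finite_subset by blast
  have "(\<Sum>y\<in>B. c x y) = (\<Sum>y\<in>B. if y \<in> nbrs E x then (1 / real (deg E y)) / real (deg E x) else 0)"
    by (intro sum.cong) (auto simp: c_def nbrs_def)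
  also have "\<dots> = (\<Sum>y\<in>B \<inter> nbrs E x. (1 / real (deg E y)) / real (deg E x))"
    using fB by (rule sum_if_in)
  also have "\<dots> = (\<Sum>y\<in>nbrs E x \<inter> B. 1 / real (deg E y)) / real (deg E x)"
    by (simp add: sum_divide_distrib Int_commute)
  finally show ?thesis .
qed

lemma mu_eq: assumes "x \<in> V" "S \<subseteq> V"
  shows "(\<Sum>y\<in>nbrs E x. f (S \<union> {y})) / real (deg E x) = f S + (\<Sum>y\<in>V - S. c x y)"
proof -
  have "(\<Sum>y\<in>nbrs E x. f (S \<union> {y})) = (\<Sum>y\<in>nbrs E x. f S + (if y \<in> S then 0 else 1 / real (deg E y)))"
    by (intro sum.cong refl f_ins) (use nbrs_sub assms in auto)
  also have "\<dots> = real (deg E x) * f S + (\<Sum>y\<in>nbrs E x - S. 1 / real (deg E y))"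
    by (simp add: sum.distrib sum_if_out fin_nbrs deg_def)
  finally have 1: "(\<Sum>y\<in>nbrs E x. f (S \<union> {y})) = real (deg E x) * f S + (\<Sum>y\<in>nbrs E x - S. 1 / real (deg E y))" .
  have "nbrs E x \<inter> (V - S) = nbrs E x - S" using nbrs_sub by blast
  then have 2: "(\<Sum>y\<in>V - S. c x y) = (\<Sum>y\<in>nbrs E x - S. 1 / real (deg E y)) / real (deg E x)"
    using c_sum[OF assms(1), of "V - S"] by simp
  show ?thesis using 1 2 deg_pos[OF assms(1)] by (simp add: field_simps)
qed

lemma nu_eq: assumes "x \<in> V" "S \<subseteq> V"
  shows "(\<Sum>y\<in>nbrs E x. f (S - {y})) / real (deg E x) = f S - (\<Sum>y\<in>S. c x y)"
proof -
  have "(\<Sum>y\<in>nbrs E x. f (S - {y})) = (\<Sum>y\<in>nbrs E x. f S - (if y \<in> S then 1 / real (deg E y) else 0))"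
    by (intro sum.cong refl f_del) (use nbrs_sub assms in auto)
  also have "\<dots> = real (deg E x) * f S - (\<Sum>y\<in>nbrs E x \<inter> S. 1 / real (deg E y))"
    by (simp add: sum_subtractf sum_if_in fin_nbrs deg_def)
  finally have 1: "(\<Sum>y\<in>nbrs E x. f (S - {y})) = real (deg E x) * f S - (\<Sum>y\<in>nbrs E x \<inter> S. 1 / real (deg E y))" .
  have 2: "(\<Sum>y\<in>S. c x y) = (\<Sum>y\<in>nbrs E x \<inter> S. 1 / real (deg E y)) / real (deg E x)"
    using c_sum[OF assms] .
  show ?thesis using 1 2 deg_pos[OF assms(1)] by (simp add: field_simps)
qed

definition d :: real where "d = (r - 1) / (r * real (card V) ^ 3)"

lemma d_pos: "d > 0"
proof -
  have "card V > 0" using n2 by simp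
  then show ?thesis using r1 by (simp add: d_def)
qed

lemma C_lower: assumes "S \<subseteq> V" "S \<noteq> {}" "S \<noteq> V"
  shows "(\<Sum>x\<in>S. \<Sum>y\<in>V - S. c x y) \<ge> 1 / (real (card V) ^ 2)"
proof -
  obtain u where u: "u \<in> S" using assms(2) by blast
  obtain v where v: "v \<in> V" "v \<notin> S" using assms(1,3) by blast
  have "E\<^sup>*\<^sup>* u v" using C u v assms(1) by (auto simp: connected_graph_def)
  then obtain x y where xy: "x \<in> S" "y \<notin> S" "E x y" using boundary_edge u v by blast
  have xV: "x \<in> V" and yV: "y \<in> V" using EV[OF xy(3)] by auto
  have fS: "finite S" using assms(1) finV finite_subset by blast
  have "c x y \<le> (\<Sum>y\<in>V - S. c x y)"
    by (rule member_le_sum) (use yV xy finV c_nonneg in auto)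
  also have "\<dots> \<le> (\<Sum>x\<in>S. \<Sum>y\<in>V - S. c x y)"
    by (rule member_le_sum[where f = "\<lambda>x. \<Sum>y\<in>V - S. c x y"]) (use xy fS c_nonneg in \<open>auto intro: sum_nonneg\<close>)
  finally have 1: "c x y \<le> (\<Sum>x\<in>S. \<Sum>y\<in>V - S. c x y)" .
  have dx: "0 < real (deg E x)" "real (deg E x) \<le> real (card V)" using deg_pos[OF xV] deg_le by auto
  have dy: "0 < real (deg E y)" "real (deg E y) \<le> real (card V)" using deg_pos[OF yV] deg_le by auto
  have "real (deg E x) * real (deg E y) \<le> real (card V) * real (card V)"
    using dx dy by (intro mult_mono) auto
  then have "1 / (real (card V) ^ 2) \<le> 1 / (real (deg E x) * real (deg E y))"
    using dx dy by (intro divide_left_mono) (auto simp: power2_eq_square)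
  also have "\<dots> = c x y" using xy by (simp add: c_def)
  finally show ?thesis using 1 by linarith
qed

lemma drift_real:
  assumes "S \<subseteq> V" "S \<noteq> {}" "S \<noteq> V"
  shows "((\<Sum>x\<in>S. (\<Sum>y\<in>nbrs E x. f (S \<union> {y})) / real (deg E x)) / real (card S)) * p S
       + ((\<Sum>x\<in>V - S. (\<Sum>y\<in>nbrs E x. f (S - {y})) / real (deg E x)) / real (card (V - S))) * (1 - p S)
       \<ge> f S + d"
proof -
  define Cs where "Cs = (\<Sum>x\<in>S. \<Sum>y\<in>V - S. c x y)"
  have fS: "finite S" using assms(1) finV finite_subset by blast
  have fVS: "finite (V - S)" using finV by blast
  have 1: "(\<Sum>x\<in>S. (\<Sum>y\<in>nbrs E x. f (S \<union> {y})) / real (deg E x)) = real (card S) * f S + Cs"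
    unfolding Cs_def using assms(1) by (subst sum.cong[OF refl mu_eq]) (auto simp: sum.distrib)
  have "(\<Sum>x\<in>V - S. \<Sum>y\<in>S. c x y) = (\<Sum>y\<in>S. \<Sum>x\<in>V - S. c x y)" by (rule sum.swap)
  also have "\<dots> = Cs" unfolding Cs_def by (simp add: c_sym)
  finally have C2: "(\<Sum>x\<in>V - S. \<Sum>y\<in>S. c x y) = Cs" .
  have 2: "(\<Sum>x\<in>V - S. (\<Sum>y\<in>nbrs E x. f (S - {y})) / real (deg E x)) = real (card (V - S)) * f S - Cs"
    using assms(1) C2 by (subst sum.cong[OF refl nu_eq]) (auto simp: sum_subtractf)
  have sp: "real (card S) > 0" using fS assms(2) by (simp add: card_gt_0_iff)
  have VSne: "V - S \<noteq> {}" using assms(1,3) by blast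
  have vp: "real (card (V - S)) > 0" using fVS VSne by (simp add: card_gt_0_iff)
  have Wp: "W S > 0" using W_pos assms by blast
  have Weq: "W S = r * real (card S) + real (card (V - S))" by (simp add: W_def fitness_total_def)
  have pe: "p S = r * real (card S) / W S" by (simp add: p_def)
  have qe: "1 - p S = real (card (V - S)) / W S" using Wp Weq pe by (simp add: field_simps)
  have lhs: "((real (card S) * f S + Cs) / real (card S)) * p S
       + ((real (card (V - S)) * f S - Cs) / real (card (V - S))) * (1 - p S)
       = f S + (r - 1) * Cs / W S"
    by (subst qe, subst pe, rule alg_drift[OF sp vp Weq Wp])
  have Clow: "Cs \<ge> 1 / (real (card V) ^ 2)" unfolding Cs_def by (rule C_lower[OF assms])
  have np: "real (card V) > 0" using n2 by simp
  have WleR: "W S \<le> r * real (card V)"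
  proof -
    have "real (card (V - S)) \<le> r * real (card (V - S))" using r1 vp by simp
    then show ?thesis using Weq card_VS[OF assms(1)] by (simp add: algebra_simps)
  qed
  have "d = (r - 1) * (1 / (real (card V) ^ 2)) / (r * real (card V))"
    by (simp add: d_def power3_eq_cube power2_eq_square)
  also have "\<dots> \<le> (r - 1) * Cs / (r * real (card V))"
    using r1 np Clow by (intro divide_right_mono mult_left_mono) auto
  also have "\<dots> \<le> (r - 1) * Cs / W S"
    using r1 np Clow Wp WleR by (intro divide_left_mono mult_nonneg_nonneg) (auto intro: order_trans[OF _ Clow])
  finally show ?thesis using 1 2 lhs by simp
qed

lemma intA:
  assumes "S \<subseteq> V" "S \<noteq> {}"
  shows "(\<integral>\<^sup>+T. ennreal (f T) \<partial>measure_pmf (bind_pmf (pmf_of_set S) (\<lambda>x. map_pmf (\<lambda>y. S \<union> {y}) (pmf_of_set (nbrs E x)))))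
     = ennreal ((\<Sum>x\<in>S. (\<Sum>y\<in>nbrs E x. f (S \<union> {y})) / real (deg E x)) / real (card S))"
proof -
  have fS: "finite S" using assms(1) finV finite_subset by blast
  have "(\<integral>\<^sup>+T. ennreal (f T) \<partial>measure_pmf (bind_pmf (pmf_of_set S) (\<lambda>x. map_pmf (\<lambda>y. S \<union> {y}) (pmf_of_set (nbrs E x)))))
     = (\<integral>\<^sup>+x. (\<integral>\<^sup>+y. ennreal (f (S \<union> {y})) \<partial>measure_pmf (pmf_of_set (nbrs E x))) \<partial>measure_pmf (pmf_of_set S))"
    by (simp only: nn_integral_bind_pmf nn_integral_map_pmf)
  also have "\<dots> = ennreal ((\<Sum>x\<in>S. (\<Sum>y\<in>nbrs E x. f (S \<union> {y})) / real (deg E x)) / real (card S))"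
  proof (rule nn_pmf_of_set_real[OF fS assms(2)])
    fix x assume "x \<in> S"
    then have xV: "x \<in> V" using assms(1) by blast
    show "0 \<le> (\<Sum>y\<in>nbrs E x. f (S \<union> {y})) / real (deg E x)"
      by (auto intro!: divide_nonneg_nonneg sum_nonneg f_nonneg)
    show "(\<integral>\<^sup>+y. ennreal (f (S \<union> {y})) \<partial>measure_pmf (pmf_of_set (nbrs E x)))
        = ennreal ((\<Sum>y\<in>nbrs E x. f (S \<union> {y})) / real (deg E x))"
      using nn_pmf_of_set_real[OF fin_nbrs nbrs_ne[OF xV], of "\<lambda>y. f (S \<union> {y})"] f_nonneg
      by (simp add: deg_def)
  qed
  finally show ?thesis .
qed

lemma intB:
  assumes "S \<subseteq> V" "S \<noteq> V"
  shows "(\<integral>\<^sup>+T. ennreal (f T) \<partial>measure_pmf (bind_pmf (pmf_of_set (V - S)) (\<lambda>x. map_pmf (\<lambda>y. S - {y}) (pmf_of_set (nbrs E x)))))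
     = ennreal ((\<Sum>x\<in>V - S. (\<Sum>y\<in>nbrs E x. f (S - {y})) / real (deg E x)) / real (card (V - S)))"
proof -
  have fS: "finite (V - S)" using finV by blast
  have ne: "V - S \<noteq> {}" using assms by blast
  have "(\<integral>\<^sup>+T. ennreal (f T) \<partial>measure_pmf (bind_pmf (pmf_of_set (V - S)) (\<lambda>x. map_pmf (\<lambda>y. S - {y}) (pmf_of_set (nbrs E x)))))
     = (\<integral>\<^sup>+x. (\<integral>\<^sup>+y. ennreal (f (S - {y})) \<partial>measure_pmf (pmf_of_set (nbrs E x))) \<partial>measure_pmf (pmf_of_set (V - S)))"
    by (simp only: nn_integral_bind_pmf nn_integral_map_pmf)
  also have "\<dots> = ennreal ((\<Sum>x\<in>V - S. (\<Sum>y\<in>nbrs E x. f (S - {y})) / real (deg E x)) / real (card (V - S)))"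
  proof (rule nn_pmf_of_set_real[OF fS ne])
    fix x assume "x \<in> V - S"
    then have xV: "x \<in> V" by blast
    show "0 \<le> (\<Sum>y\<in>nbrs E x. f (S - {y})) / real (deg E x)"
      by (auto intro!: divide_nonneg_nonneg sum_nonneg f_nonneg)
    show "(\<integral>\<^sup>+y. ennreal (f (S - {y})) \<partial>measure_pmf (pmf_of_set (nbrs E x)))
        = ennreal ((\<Sum>y\<in>nbrs E x. f (S - {y})) / real (deg E x))"
      using nn_pmf_of_set_real[OF fin_nbrs nbrs_ne[OF xV], of "\<lambda>y. f (S - {y})"] f_nonneg
      by (simp add: deg_def)
  qed
  finally show ?thesis .
qed

lemma int_step:
  assumes "S \<subseteq> V"
  shows "(\<integral>\<^sup>+T. ennreal (f T) \<partial>measure_pmf (moran_step V E r S))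
    = (\<integral>\<^sup>+T. ennreal (f T) \<partial>measure_pmf (bind_pmf (pmf_of_set S) (\<lambda>x. map_pmf (\<lambda>y. S \<union> {y}) (pmf_of_set (nbrs E x))))) * ennreal (p S)
    + (\<integral>\<^sup>+T. ennreal (f T) \<partial>measure_pmf (bind_pmf (pmf_of_set (V - S)) (\<lambda>x. map_pmf (\<lambda>y. S - {y}) (pmf_of_set (nbrs E x))))) * ennreal (1 - p S)"
proof -
  have pe: "r * real (card S) / fitness_total V r S = p S" by (simp add: p_def W_def)
  show ?thesis
    unfolding moran_step_def pe using p_bounds[OF assms]
    by (simp only: nn_integral_bind_pmf) (simp add: nn_integral_bernoulli_pmf)
qed

abbreviation Tset where "Tset \<equiv> {S. S \<noteq> {} \<and> S \<noteq> V}"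

lemma drift:
  assumes "S \<subseteq> V"
  shows "(\<integral>\<^sup>+T. ennreal (f T) \<partial>measure_pmf (moran_step V E r S)) \<ge> ennreal (f S + d * indicator Tset S)"
proof (cases "S = {}")
  case True
  then show ?thesis by (simp add: f_def phi_def)
next
  case ne: False
  show ?thesis
  proof (cases "S = V")
    case True
    have pV: "p S = 1" using True n2 r1 by (simp add: p_def W_def fitness_total_def)
    have "(\<Sum>x\<in>S. (\<Sum>y\<in>nbrs E x. f (S \<union> {y})) / real (deg E x)) = (\<Sum>x\<in>S. f S)"
      using True by (intro sum.cong refl) (subst mu_eq, auto)
    then have "(\<Sum>x\<in>S. (\<Sum>y\<in>nbrs E x. f (S \<union> {y})) / real (deg E x)) / real (card S) = f S"
      using ne True finV by (simp add: card_gt_0_iff)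
    then show ?thesis using int_step[OF assms] intA[OF assms ne] pV True by simp
  next
    case nV: False
    have Wp: "W S > 0" using W_pos assms ne by blast
    have p0: "0 \<le> p S" "p S \<le> 1" using p_bounds[OF assms] by auto
    have m1: "0 \<le> (\<Sum>x\<in>S. (\<Sum>y\<in>nbrs E x. f (S \<union> {y})) / real (deg E x)) / real (card S)"
      by (auto intro!: divide_nonneg_nonneg sum_nonneg f_nonneg)
    have m2: "0 \<le> (\<Sum>x\<in>V - S. (\<Sum>y\<in>nbrs E x. f (S - {y})) / real (deg E x)) / real (card (V - S))"
      by (auto intro!: divide_nonneg_nonneg sum_nonneg f_nonneg)
    have gen: "\<And>a b q. 0 \<le> a \<Longrightarrow> 0 \<le> b \<Longrightarrow> 0 \<le> q \<Longrightarrow> q \<le> 1 \<Longrightarrow>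
       ennreal (a * q + b * (1 - q)) = ennreal a * ennreal q + ennreal b * ennreal (1 - q)"
      by (simp add: ennreal_mult ennreal_plus)
    have "ennreal (f S + d * indicator Tset S) = ennreal (f S + d)" using ne nV by simp
    also have "\<dots> \<le> ennreal (((\<Sum>x\<in>S. (\<Sum>y\<in>nbrs E x. f (S \<union> {y})) / real (deg E x)) / real (card S)) * p S
       + ((\<Sum>x\<in>V - S. (\<Sum>y\<in>nbrs E x. f (S - {y})) / real (deg E x)) / real (card (V - S))) * (1 - p S))"
      using drift_real[OF assms ne nV] by (rule ennreal_leI)
    also have "\<dots> = (\<integral>\<^sup>+T. ennreal (f T) \<partial>measure_pmf (moran_step V E r S))"
      unfolding int_step[OF assms] intA[OF assms ne] intB[OF assms nV]
      by (rule gen[OF m1 m2 p0])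
    finally show ?thesis .
  qed
qed

lemma main_bound:
  assumes x0: "x0 \<in> V"
  shows "expected_absorption_time V E r x0 \<le> ennreal (phi E V / d)"
proof -
  define a where "a i = (\<integral>\<^sup>+T. ennreal (f T) \<partial>measure_pmf (moran_dist V E r x0 i))" for i
  define q where "q i = measure_pmf.prob (moran_dist V E r x0 i) Tset" for i
  have stepi: "a i + ennreal d * ennreal (q i) \<le> a (Suc i)" for i
  proof -
    have "a (Suc i) = (\<integral>\<^sup>+S. (\<integral>\<^sup>+T. ennreal (f T) \<partial>measure_pmf (moran_step V E r S)) \<partial>measure_pmf (moran_dist V E r x0 i))"
      by (simp add: a_def)
    also have "\<dots> \<ge> (\<integral>\<^sup>+S. ennreal (f S + d * indicator Tset S) \<partial>measure_pmf (moran_dist V E r x0 i))"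
      by (intro nn_integral_mono_AE) (auto simp: AE_measure_pmf_iff intro!: drift dist_support[OF x0])
    moreover have "(\<integral>\<^sup>+S. ennreal (f S + d * indicator Tset S) \<partial>measure_pmf (moran_dist V E r x0 i))
       = (\<integral>\<^sup>+S. ennreal (f S) + ennreal d * indicator Tset S \<partial>measure_pmf (moran_dist V E r x0 i))"
      using d_pos f_nonneg by (intro nn_integral_cong) (auto simp: ennreal_plus indicator_def)
    moreover have "\<dots> = a i + ennreal d * ennreal (q i)"
      by (simp add: a_def q_def nn_integral_add nn_integral_cmult measure_pmf.emeasure_eq_measure)
    ultimately show ?thesis by simp
  qed
  have lowb: "ennreal d * (\<Sum>i<n. ennreal (q i)) \<le> a n" for n
  proof (induction n)
    case 0 then show ?case by simp
  next
    case (Suc n)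
    have "ennreal d * (\<Sum>i<Suc n. ennreal (q i)) = ennreal d * (\<Sum>i<n. ennreal (q i)) + ennreal d * ennreal (q n)"
      by (simp add: distrib_left)
    also have "\<dots> \<le> a n + ennreal d * ennreal (q n)" using Suc by (intro add_right_mono)
    also have "\<dots> \<le> a (Suc n)" by (rule stepi)
    finally show ?case .
  qed
  have upb: "a n \<le> ennreal (phi E V)" for n
  proof -
    have "a n \<le> (\<integral>\<^sup>+T. ennreal (phi E V) \<partial>measure_pmf (moran_dist V E r x0 n))"
      unfolding a_def by (intro nn_integral_mono ennreal_leI f_le)
    also have "\<dots> = ennreal (phi E V)" by simp
    finally show ?thesis .
  qed
  have part: "(\<Sum>i<n. ennreal (q i)) \<le> ennreal (phi E V / d)" for n
  proof -
    have qn: "\<And>i. 0 \<le> q i" by (simp add: q_def)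
    have "ennreal (d * (\<Sum>i<n. q i)) = ennreal d * (\<Sum>i<n. ennreal (q i))"
      using qn d_pos by (simp add: ennreal_mult sum_nonneg)
    also have "\<dots> \<le> ennreal (phi E V)" using lowb upb order_trans by blast
    finally have "d * (\<Sum>i<n. q i) \<le> phi E V" using phi_nonneg by (simp add: ennreal_le_iff)
    then have "(\<Sum>i<n. q i) \<le> phi E V / d" using d_pos by (simp add: pos_le_divide_eq mult.commute)
    then show ?thesis using qn by (simp add: ennreal_leI)
  qed
  have "expected_absorption_time V E r x0 = (\<Sum>i. ennreal (q i))"
    by (simp add: expected_absorption_time_def q_def)
  also have "\<dots> = (SUP n. \<Sum>i<n. ennreal (q i))" by (rule suminf_eq_SUP)
  also have "\<dots> \<le> ennreal (phi E V / d)" by (rule SUP_least) (rule part)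
  finally show ?thesis .
qed

end

theorem theorem7:
  fixes V :: "'a set" and E :: "'a \<Rightarrow> 'a \<Rightarrow> bool" and r :: real and x0 :: 'a
  assumes "simple_graph V E" and "connected_graph V E"
    and "card V \<ge> 2" and "r > 1" and "x0 \<in> V"
  shows "expected_absorption_time V E r x0
           \<le> ennreal (r / (r - 1) * real (card V) ^ 3 * phi E V)
       \<and> r / (r - 1) * real (card V) ^ 3 * phi E V \<le> r / (r - 1) * real (card V) ^ 4"
proof -
  interpret M: moran V E r using assms(1-4) by unfold_locales
  have eq: "phi E V / M.d = r / (r - 1) * real (card V) ^ 3 * phi E V"
    using assms(4) by (simp add: M.d_def field_simps)
  have 1: "expected_absorption_time V E r x0 \<le> ennreal (r / (r - 1) * real (card V) ^ 3 * phi E V)"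
    using M.main_bound[OF assms(5)] eq by simp
  have k: "0 \<le> r / (r - 1) * real (card V) ^ 3" using assms(4) by simp
  have "r / (r - 1) * real (card V) ^ 3 * phi E V \<le> r / (r - 1) * real (card V) ^ 3 * real (card V)"
    using M.phi_le_card k by (rule mult_left_mono)
  also have "\<dots> = r / (r - 1) * real (card V) ^ 4" by (simp add: power_Suc2 power_commutes numeral_eq_Suc)
  finally show ?thesis using 1 by simp
qed

end
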